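(* For every $i\in\{1,2,3,4\}$, every unit ball $b$ and every configuration $\sigma_b$ on $b$ belonging to the class $\mathcal{C}_i$, there exists a periodic configuration $\varphi:V\to\{-1,1\}$ with period not exceeding 2 such that $\varphi_{b'}\in\mathcal{C}_i$ for every unit ball $b'$ and $\varphi_b=\sigma_b$.
   Context: Let $G_2$ be the free product of three cyclic groups of order two with generators $a_1,a_2,a_3$; its elements are the vertices $V$ of the Cayley tree of order 2, with $g,h$ adjacent iff $h=ga_i$ for some $i$, and $d$ the graph distance. A configuration $\varphi:V\to\{-1,1\}$ is periodic with period not exceeding 2 if there is a subgroup $G^*\subset G_2$ of index at most 2 such that $\varphi(gh)=\varphi(h)$ for all $g\in G^*$, $h\in G_2$. A unit ball is $b=\{y: d(x,y)\le1\}$ (center $x$ and its three neighbours, the leaves); $\varphi_b$ denotes the restriction to $b$. A configuration on a unit ball belongs to $\mathcal{C}_1$, $\mathcal{C}_2$, $\mathcal{C}_4$, $\mathcal{C}_3$ according as exactly $3$, $2$, $1$, $0$ of its leaves carry the same value as its center. *)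

theory Defs
  imports "HOL-Algebra.Coset"
begin

text \<open>The group G_2 = Z2 * Z2 * Z2 with generators a_1, a_2, a_3, encoded as a_i = [i-1]
  for i-1 in {0,1,2}. Elements are reduced words: lists over {0,1,2} with no two
  consecutive equal letters.\<close>

definition reduced :: "nat list \<Rightarrow> bool" where
  "reduced w \<longleftrightarrow> set w \<subseteq> {0,1,2} \<and> (\<forall>k. Suc k < length w \<longrightarrow> w ! k \<noteq> w ! Suc k)"

definition gstep :: "nat list \<Rightarrow> nat \<Rightarrow> nat list" where
  "gstep w a = (if w \<noteq> [] \<and> last w = a then butlast w else w @ [a])"

definition gmul :: "nat list \<Rightarrow> nat list \<Rightarrow> nat list" where
  "gmul g h = foldl gstep g h"

definition G2 :: "nat list monoid" where
  "G2 = \<lparr>carrier = {w. reduced w}, mult = gmul, one = []\<rparr>"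

definition unit_ball :: "nat list \<Rightarrow> nat list set" where
  "unit_ball x = insert x {gstep x i | i. i \<in> {0,1,2::nat}}"

definition agree_count :: "(nat list \<Rightarrow> int) \<Rightarrow> nat list \<Rightarrow> nat" where
  "agree_count s x = card {i \<in> {0,1,2::nat}. s (gstep x i) = s x}"

definition in_class :: "nat \<Rightarrow> (nat list \<Rightarrow> int) \<Rightarrow> nat list \<Rightarrow> bool" where
  "in_class i s x \<longleftrightarrow> agree_count s x =
     (if i = 1 then 3 else if i = 2 then 2 else if i = 3 then 0 else if i = 4 then 1 else 42)"

definition periodic_le2 :: "(nat list \<Rightarrow> int) \<Rightarrow> bool" where
  "periodic_le2 \<phi> \<longleftrightarrow> (\<exists>H. subgroup H G2 \<and> finite (rcosets\<^bsub>G2\<^esub> H) \<and> card (rcosets\<^bsub>G2\<^esub> H) \<le> 2 \<and>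
      (\<forall>g\<in>H. \<forall>h\<in>carrier G2. \<phi> (g \<otimes>\<^bsub>G2\<^esub> h) = \<phi> h))"

end

theory Submission
  imports Defs
begin

lemma reduced_succ: "reduced w \<longleftrightarrow> set w \<subseteq> {0,1,2} \<and> successively (\<noteq>) w"
  unfolding reduced_def successively_conv_nth by simp

lemma reduced_Nil[simp]: "reduced []"
  by (simp add: reduced_succ)

lemma reduced_snoc: "reduced (w @ [a]) \<longleftrightarrow> reduced w \<and> a \<in> {0,1,2} \<and> (w \<noteq> [] \<longrightarrow> last w \<noteq> a)"
  by (auto simp: reduced_succ successively_append_iff)

lemma reduced_Cons: "reduced (a # w) \<longleftrightarrow> a \<in> {0,1,2} \<and> reduced w \<and> (w \<noteq> [] \<longrightarrow> hd w \<noteq> a)"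
  by (cases w) (auto simp: reduced_succ)

lemma reduced_rev: "reduced w \<Longrightarrow> reduced (rev w)"
  by (induction w) (auto simp: reduced_Cons reduced_snoc last_rev)

lemma reduced_gstep: "reduced w \<Longrightarrow> a \<in> {0,1,2} \<Longrightarrow> reduced (gstep w a)"
proof (cases "w \<noteq> [] \<and> last w = a")
  case True
  assume "reduced w"
  then have "reduced (butlast w @ [last w])" using True by (metis append_butlast_last_id)
  then show ?thesis using True by (simp add: gstep_def reduced_snoc)
next
  case False
  then show "reduced w \<Longrightarrow> a \<in> {0,1,2} \<Longrightarrow> ?thesis" by (auto simp: gstep_def reduced_snoc)
qed

lemma gstep_gstep: "reduced w \<Longrightarrow> gstep (gstep w a) a = w"
proof (cases "w \<noteq> [] \<and> last w = a")
  case True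
  assume r: "reduced w"
  have w: "w = butlast w @ [a]" using True by (metis append_butlast_last_id)
  then have "reduced (butlast w @ [a])" using r by simp
  then have "\<not> (butlast w \<noteq> [] \<and> last (butlast w) = a)" by (auto simp: reduced_snoc)
  then show ?thesis using True w by (auto simp: gstep_def)
next
  case False
  then show ?thesis by (auto simp: gstep_def)
qed

lemma reduced_foldl: "reduced g \<Longrightarrow> set h \<subseteq> {0,1,2} \<Longrightarrow> reduced (foldl gstep g h)"
  by (induction h arbitrary: g) (auto simp: reduced_gstep)

lemma key: "reduced g \<Longrightarrow> reduced h \<Longrightarrow> a \<in> {0,1,2} \<Longrightarrow>
  foldl gstep g (gstep h a) = gstep (foldl gstep g h) a"
proof (cases "h \<noteq> [] \<and> last h = a")
  case True
  assume r: "reduced g" "reduced h" "a \<in> {0,1,2}"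
  have h: "h = butlast h @ [a]" using True by (metis append_butlast_last_id)
  have "set (butlast h) \<subseteq> {0,1,2}" using r(2) by (meson in_set_butlastD reduced_succ subset_iff)
  then have "reduced (foldl gstep g (butlast h))" using r reduced_foldl by blast
  moreover have "foldl gstep g h = gstep (foldl gstep g (butlast h)) a"
    by (subst h) simp
  moreover have "gstep h a = butlast h" using True by (simp add: gstep_def)
  ultimately show ?thesis using gstep_gstep[of "foldl gstep g (butlast h)" a] by metis
next
  case False
  then show ?thesis by (auto simp: gstep_def)
qed

lemma assoc: "reduced g \<Longrightarrow> reduced h \<Longrightarrow> set k \<subseteq> {0,1,2} \<Longrightarrow>
  foldl gstep g (foldl gstep h k) = foldl gstep (foldl gstep g h) k"
proof (induction k rule: rev_induct)
  case Nil
  then show ?case by simp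
next
  case (snoc a k)
  have "foldl gstep g (foldl gstep h (k @ [a])) = foldl gstep g (gstep (foldl gstep h k) a)" by simp
  also have "\<dots> = gstep (foldl gstep g (foldl gstep h k)) a"
    using snoc by (intro key) (auto intro!: reduced_foldl)
  also have "\<dots> = foldl gstep (foldl gstep g h) (k @ [a])" using snoc by simp
  finally show ?case .
qed

lemma left_id: "reduced w \<Longrightarrow> foldl gstep [] w = w"
proof (induction w rule: rev_induct)
  case (snoc a u)
  then show ?case by (auto simp: reduced_snoc gstep_def)
qed simp

lemma right_inv: "reduced w \<Longrightarrow> foldl gstep w (rev w) = []"
proof (induction w rule: rev_induct)
  case (snoc a u)
  have "gstep (u @ [a]) a = u" by (simp add: gstep_def)
  then show ?case using snoc by (simp add: reduced_snoc)
qed simp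

lemma G2_group: "group G2"
proof (rule groupI)
  show "x \<otimes>\<^bsub>G2\<^esub> y \<in> carrier G2" if "x \<in> carrier G2" "y \<in> carrier G2" for x y
  proof -
    have "set y \<subseteq> {0,1,2}" "reduced x" using that by (auto simp: G2_def reduced_succ)
    then show ?thesis by (simp add: G2_def gmul_def reduced_foldl)
  qed
  show "\<one>\<^bsub>G2\<^esub> \<in> carrier G2" by (simp add: G2_def)
  show "x \<otimes>\<^bsub>G2\<^esub> y \<otimes>\<^bsub>G2\<^esub> z = x \<otimes>\<^bsub>G2\<^esub> (y \<otimes>\<^bsub>G2\<^esub> z)"
    if "x \<in> carrier G2" "y \<in> carrier G2" "z \<in> carrier G2" for x y z
  proof -
    have "set z \<subseteq> {0,1,2}" "reduced x" "reduced y" using that by (auto simp: G2_def reduced_succ)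
    then show ?thesis using assoc[of x y z] by (simp add: G2_def gmul_def)
  qed
  show "\<one>\<^bsub>G2\<^esub> \<otimes>\<^bsub>G2\<^esub> x = x" if "x \<in> carrier G2" for x
    using that by (simp add: G2_def gmul_def left_id)
  show "\<exists>y\<in>carrier G2. y \<otimes>\<^bsub>G2\<^esub> x = \<one>\<^bsub>G2\<^esub>" if "x \<in> carrier G2" for x
    using that right_inv[of "rev x"] reduced_rev[of x]
    by (intro bexI[of _ "rev x"]) (auto simp: G2_def gmul_def)
qed

lemma G2_inv: "x \<in> carrier G2 \<Longrightarrow> inv\<^bsub>G2\<^esub> x = rev x"
  using group.inv_equality[OF G2_group, of "rev x" x] right_inv[of "rev x"] reduced_rev[of x]
  by (auto simp: G2_def gmul_def)

definition cnt :: "nat set \<Rightarrow> nat list \<Rightarrow> nat" where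
  "cnt S w = length (filter (\<lambda>c. c \<in> S) w)"

lemma cnt_gstep: "even (cnt S (gstep w a)) \<longleftrightarrow> (even (cnt S w) \<longleftrightarrow> a \<notin> S)"
proof (cases "w \<noteq> [] \<and> last w = a")
  case True
  have w: "w = butlast w @ [a]" using True by (metis append_butlast_last_id)
  have "cnt S w = cnt S (butlast w) + (if a \<in> S then 1 else 0)"
    by (subst w) (simp add: cnt_def)
  then show ?thesis using True by (auto simp: gstep_def)
next
  case False
  then show ?thesis by (auto simp: gstep_def cnt_def)
qed

lemma cnt_gmul: "even (cnt S (foldl gstep g h)) \<longleftrightarrow> (even (cnt S g) \<longleftrightarrow> even (cnt S h))"
proof (induction h arbitrary: g)
  case Nil
  then show ?case by (simp add: cnt_def)
next
  case (Cons a h)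
  have "cnt S (a # h) = (if a \<in> S then 1 else 0) + cnt S h" by (simp add: cnt_def)
  then show ?case using Cons[of "gstep g a"] cnt_gstep[of S g a] by auto
qed

lemma cnt_rev: "cnt S (rev w) = cnt S w"
  by (simp add: cnt_def rev_filter[symmetric])

theorem lemma3p2:
  fixes i :: nat and x :: "nat list" and \<sigma> :: "nat list \<Rightarrow> int"
  assumes "i \<in> {1,2,3,4}"
    and "x \<in> carrier G2"
    and "\<forall>y\<in>unit_ball x. \<sigma> y \<in> {-1,1}"
    and "in_class i \<sigma> x"
  shows "\<exists>\<phi> :: nat list \<Rightarrow> int.
           (\<forall>y\<in>carrier G2. \<phi> y \<in> {-1,1}) \<and> periodic_le2 \<phi> \<and>
           (\<forall>y\<in>carrier G2. in_class i \<phi> y) \<and>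
           (\<forall>y\<in>unit_ball x. \<phi> y = \<sigma> y)"
proof -
  define S where "S = {k \<in> {0,1,2::nat}. \<sigma> (gstep x k) \<noteq> \<sigma> x}"
  define \<phi> where "\<phi> = (\<lambda>w. if (even (cnt S w) \<longleftrightarrow> even (cnt S x)) then \<sigma> x else - \<sigma> x)"
  define H where "H = {w \<in> carrier G2. even (cnt S w)}"
  have grp: "group G2" by (rule G2_group)
  have xb: "x \<in> unit_ball x" by (simp add: unit_ball_def)
  have lb: "gstep x k \<in> unit_ball x" if "k \<in> {0,1,2}" for k
    using that unfolding unit_ball_def by blast
  have sx: "\<sigma> x \<in> {-1,1}" using assms(3) xb by blast
  have phi_vals: "\<phi> y \<in> {-1,1}" for y using sx by (auto simp: \<phi>_def)
  have phi_step: "\<phi> (gstep y k) = \<phi> y \<longleftrightarrow> k \<notin> S" for y k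
    using sx cnt_gstep[of S y k] by (auto simp: \<phi>_def)
  have ac: "agree_count \<phi> y = agree_count \<sigma> x" for y
  proof -
    have "{k \<in> {0,1,2::nat}. \<phi> (gstep y k) = \<phi> y} = {k \<in> {0,1,2::nat}. \<sigma> (gstep x k) = \<sigma> x}"
      using phi_step by (auto simp: S_def)
    then show ?thesis by (simp add: agree_count_def)
  qed
  have cls: "\<forall>y\<in>carrier G2. in_class i \<phi> y"
    using assms(4) ac by (simp add: in_class_def)
  have ball: "\<forall>y\<in>unit_ball x. \<phi> y = \<sigma> y"
  proof
    fix y assume "y \<in> unit_ball x"
    then consider "y = x" | k where "k \<in> {0,1,2::nat}" "y = gstep x k"
      unfolding unit_ball_def by blast
    then show "\<phi> y = \<sigma> y"
    proof cases
      case 1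
      then show ?thesis by (simp add: \<phi>_def)
    next
      case 2
      have "\<sigma> y \<in> {-1,1}" using assms(3) lb 2 by blast
      moreover have "\<phi> y = (if k \<in> S then - \<sigma> x else \<sigma> x)"
        using 2 cnt_gstep[of S x k] by (auto simp: \<phi>_def)
      ultimately show ?thesis using 2 sx by (auto simp: S_def)
    qed
  qed
  have mulc: "a \<otimes>\<^bsub>G2\<^esub> b \<in> carrier G2" if "a \<in> carrier G2" "b \<in> carrier G2" for a b
    using group.subgroup_self[OF grp] that by (meson grp monoid.m_closed group.is_monoid)
  have cm: "even (cnt S (a \<otimes>\<^bsub>G2\<^esub> b)) \<longleftrightarrow> (even (cnt S a) \<longleftrightarrow> even (cnt S b))" for a b
    by (simp add: G2_def gmul_def cnt_gmul)
  have sub: "subgroup H G2"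
  proof (rule group.subgroupI[OF grp])
    show "H \<subseteq> carrier G2" by (auto simp: H_def)
    show "H \<noteq> {}" using H_def by (rule_tac ex_in_conv[THEN iffD1, OF exI[of _ "[]"]]) (simp add: G2_def cnt_def)
    show "inv\<^bsub>G2\<^esub> a \<in> H" if "a \<in> H" for a
      using that G2_inv[of a] reduced_rev[of a] cnt_rev[of S a] by (auto simp: H_def G2_def)
    show "a \<otimes>\<^bsub>G2\<^esub> b \<in> H" if "a \<in> H" "b \<in> H" for a b
      using that mulc cm by (auto simp: H_def)
  qed
  have coset: "H #>\<^bsub>G2\<^esub> a = {w \<in> carrier G2. even (cnt S w) = even (cnt S a)}"
    if a: "a \<in> carrier G2" for a
  proof
    show "H #>\<^bsub>G2\<^esub> a \<subseteq> {w \<in> carrier G2. even (cnt S w) = even (cnt S a)}"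
      using a mulc cm by (auto simp: r_coset_def H_def)
    show "{w \<in> carrier G2. even (cnt S w) = even (cnt S a)} \<subseteq> H #>\<^bsub>G2\<^esub> a"
    proof
      fix w assume w: "w \<in> {w \<in> carrier G2. even (cnt S w) = even (cnt S a)}"
      define h where "h = w \<otimes>\<^bsub>G2\<^esub> inv\<^bsub>G2\<^esub> a"
      have ia: "inv\<^bsub>G2\<^esub> a \<in> carrier G2" using a grp by (simp add: group.inv_closed)
      have "h \<in> H" using w ia a mulc cm G2_inv[OF a] cnt_rev[of S a] by (auto simp: H_def h_def)
      moreover have "h \<otimes>\<^bsub>G2\<^esub> a = w"
        using w ia a grp by (simp add: h_def monoid.m_assoc group.l_inv group.is_monoid monoid.r_one)
      ultimately show "w \<in> H #>\<^bsub>G2\<^esub> a" by (auto simp: r_coset_def)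
    qed
  qed
  define E where "E = {w \<in> carrier G2. even (cnt S w)}"
  define Od where "Od = {w \<in> carrier G2. odd (cnt S w)}"
  have rc: "rcosets\<^bsub>G2\<^esub> H \<subseteq> {E, Od}"
    using coset by (auto simp: RCOSETS_def E_def Od_def)
  have fin: "finite (rcosets\<^bsub>G2\<^esub> H)" using rc finite_subset by blast
  have "card (rcosets\<^bsub>G2\<^esub> H) \<le> card {E, Od}" using rc by (intro card_mono) auto
  also have "\<dots> \<le> 2" by (cases "E = Od") auto
  finally have card2: "card (rcosets\<^bsub>G2\<^esub> H) \<le> 2" .
  have per: "\<forall>g\<in>H. \<forall>h\<in>carrier G2. \<phi> (g \<otimes>\<^bsub>G2\<^esub> h) = \<phi> h"
    using cm by (auto simp: H_def \<phi>_def)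
  have "periodic_le2 \<phi>" unfolding periodic_le2_def using sub fin card2 per by blast
  then show ?thesis using phi_vals cls ball by blast
qed

end
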